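(* Let $n\ge 1$ be an integer and let $a,b,c:\{0,1,\dots,n+1\}\to\mathbb{R}$ with $a(k)\neq 0$ and $c(k)\neq 0$ for $k=0,\dots,n$. Let $\Phi_{a,b,c},\Psi_{a,b,c}:\{0,\dots,n+1\}\to\mathbb{R}$ be the unique solutions of the homogeneous equation $$-a(k)u(k+1)+b(k)u(k)-c(k-1)u(k-1)=0,\qquad k=1,\dots,n,$$ determined respectively by $\Phi_{a,b,c}(0)=a(0)$, $\Phi_{a,b,c}(1)=b(0)$, and by $\Psi_{a,b,c}(n)=b(n+1)$, $\Psi_{a,b,c}(n+1)=c(n)$. Then for every $k=0,\dots,n+1$, $$\Phi_{a,b,c}(k)=a(0)\Big(\prod_{s=0}^{k-1}a(s)\Big)^{-1}\Phi_{\mathsf J}(k),\qquad \Psi_{a,b,c}(k)=c(n)\Big(\prod_{s=k}^{n}c(s)\Big)^{-1}\Psi_{\mathsf J}(k),$$ and moreover $$b(0)\Psi_{a,b,c}(0)-a(0)\Psi_{a,b,c}(1)=D_{\mathsf J}\Big(\prod_{s=0}^{n-1}c(s)\Big)^{-1}.$$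
   Context: Empty products equal $1$ and empty sums equal $0$. For $m\in\mathbb{N}$ and a sequence $x$, the shift $x_m$ is $x_m(j)=x(j+m)$; $ac$ denotes the pointwise product $(ac)(j)=a(j)c(j)$. Chebyshev functions: for sequences $x,y$ set $P_{-1}(x,y)=0$, $P_0(x,y)=1$, and for $k\ge1$ $$P_k(x,y)=\sum_{m=0}^{\lfloor k/2\rfloor}(-1)^m\sum_{\alpha\in\ell_k^m}x^{\bar\alpha}y^{\alpha},$$ where: for $\alpha=(\alpha_1,\dots,\alpha_k)\in\{0,1\}^k$, $x^\alpha=\prod_{j=1}^k x(j)^{\alpha_j}$ and $|\alpha|=\sum_j\alpha_j$; $\ell_k^0=\{(0,\dots,0)\}$; for $m\ge1$, $\ell_k^m$ is the set of $\alpha\in\{0,1\}^k$ with $\alpha_k=0$, $|\alpha|=m$, and whose positions of ones $i_1<\dots<i_m$ satisfy $i_{j+1}-i_j\ge2$ for $j=1,\dots,m-1$; and $\bar\alpha\in\{0,1\}^k$ is defined by $\bar\alpha_{i_j}=\bar\alpha_{i_j+1}=0$ for $j=1,\dots,m$ and $\bar\alpha_i=1$ otherwise. Define $\Phi_{\mathsf J}(0)=1$, $\Phi_{\mathsf J}(k)=b(0)P_{k-1}(b,ac)-a(0)c(0)P_{k-2}(b_1,a_1c_1)$ for $k=1,\dots,n+1$; $\Psi_{\mathsf J}(k)=b(n+1)P_{n-k}(b_k,a_kc_k)-a(n)c(n)P_{n-k-1}(b_k,a_kc_k)$ for $k=0,\dots,n$, and $\Psi_{\mathsf J}(n+1)=1$;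 $D_{\mathsf J}=b(0)\big[b(n+1)P_n(b,ac)-a(n)c(n)P_{n-1}(b,ac)\big]-a(0)c(0)\big[b(n+1)P_{n-1}(b_1,a_1c_1)-a(n)c(n)P_{n-2}(b_1,a_1c_1)\big]$. *)

theory Defs
  imports Complex_Main
begin

text \<open>Sequences are functions nat \<Rightarrow> real. A multi-index \<alpha> in {0,1}^k is represented
  by the set of positions of its ones, a subset of {1..k}.\<close>

definition shiftseq :: "nat \<Rightarrow> (nat \<Rightarrow> real) \<Rightarrow> nat \<Rightarrow> real" where
  "shiftseq m x = (\<lambda>j. x (j + m))"

definition pmult :: "(nat \<Rightarrow> real) \<Rightarrow> (nat \<Rightarrow> real) \<Rightarrow> nat \<Rightarrow> real" where
  "pmult a c = (\<lambda>j. a j * c j)"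

definition ell :: "nat \<Rightarrow> nat \<Rightarrow> nat set set" where
  "ell k m = {S. S \<subseteq> {1..k} \<and> k \<notin> S \<and> card S = m \<and>
                 (\<forall>i\<in>S. \<forall>j\<in>S. i < j \<longrightarrow> j - i \<ge> 2)}"

definition barpos :: "nat \<Rightarrow> nat set \<Rightarrow> nat set" where
  "barpos k S = {1..k} - (S \<union> Suc ` S)"

definition chebP :: "int \<Rightarrow> (nat \<Rightarrow> real) \<Rightarrow> (nat \<Rightarrow> real) \<Rightarrow> real" where
  "chebP k x y =
     (if k = -1 then 0
      else if k = 0 then 1
      else if k < 0 then 0
      else (\<Sum>m = 0..nat k div 2. (-1) ^ m *
              (\<Sum>S\<in>ell (nat k) m. (\<Prod>i\<in>barpos (nat k) S. x i) * (\<Prod>i\<in>S. y i))))"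

definition PhiJ :: "(nat \<Rightarrow> real) \<Rightarrow> (nat \<Rightarrow> real) \<Rightarrow> (nat \<Rightarrow> real) \<Rightarrow> nat \<Rightarrow> real" where
  "PhiJ a b c k =
     (if k = 0 then 1
      else b 0 * chebP (int k - 1) b (pmult a c)
           - a 0 * c 0 * chebP (int k - 2) (shiftseq 1 b) (pmult (shiftseq 1 a) (shiftseq 1 c)))"

definition PsiJ :: "nat \<Rightarrow> (nat \<Rightarrow> real) \<Rightarrow> (nat \<Rightarrow> real) \<Rightarrow> (nat \<Rightarrow> real) \<Rightarrow> nat \<Rightarrow> real" where
  "PsiJ n a b c k =
     (if k = n + 1 then 1
      else b (n + 1) * chebP (int n - int k) (shiftseq k b) (pmult (shiftseq k a) (shiftseq k c))
           - a n * c n * chebP (int n - int k - 1) (shiftseq k b) (pmult (shiftseq k a) (shiftseq k c)))"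

definition DJ :: "nat \<Rightarrow> (nat \<Rightarrow> real) \<Rightarrow> (nat \<Rightarrow> real) \<Rightarrow> (nat \<Rightarrow> real) \<Rightarrow> real" where
  "DJ n a b c =
     b 0 * (b (n + 1) * chebP (int n) b (pmult a c) - a n * c n * chebP (int n - 1) b (pmult a c))
     - a 0 * c 0 * (b (n + 1) * chebP (int n - 1) (shiftseq 1 b) (pmult (shiftseq 1 a) (shiftseq 1 c))
                    - a n * c n * chebP (int n - 2) (shiftseq 1 b) (pmult (shiftseq 1 a) (shiftseq 1 c)))"

end

theory Submission
  imports Defs
begin

definition sparse :: "nat set \<Rightarrow> bool" where
  "sparse S = (\<forall>i\<in>S. \<forall>j\<in>S. i < j \<longrightarrow> 2 \<le> j - i)"
definition GG :: "nat \<Rightarrow> nat set set" where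
  "GG k = {S. S \<subseteq> {1..<k} \<and> sparse S}"
definition FF :: "nat \<Rightarrow> (nat \<Rightarrow> real) \<Rightarrow> (nat \<Rightarrow> real) \<Rightarrow> real" where
  "FF k x y = (\<Sum>S\<in>GG k. (-1) ^ card S * (\<Prod>i\<in>barpos k S. x i) * (\<Prod>i\<in>S. y i))"

lemma finite_GG: "finite (GG k)"
  by (rule finite_subset[of _ "Pow {1..<k}"]) (auto simp: GG_def)

lemma card_GG: assumes "S \<in> GG k" shows "card S \<le> k div 2"
proof -
  have S: "S \<subseteq> {1..<k}" "sparse S" using assms by (auto simp: GG_def)
  have fin: "finite S" using S(1) finite_subset by blast
  have disj: "S \<inter> Suc ` S = {}"
  proof (rule ccontr)
    assume "S \<inter> Suc ` S \<noteq> {}"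
    then obtain i where "i \<in> S" "Suc i \<in> S" by auto
    then show False using S(2) unfolding sparse_def by (metis Suc_diff_le diff_Suc_1 diff_self_eq_0 lessI order.refl not_less_eq_eq numeral_2_eq_2)
  qed
  have sub: "S \<union> Suc ` S \<subseteq> {1..k}" using S(1) by auto
  have "card (S \<union> Suc ` S) = card S + card (Suc ` S)"
    using card_Un_disjoint[OF fin finite_imageI[OF fin] disj] .
  also have "card (Suc ` S) = card S" by (simp add: card_image)
  finally have "2 * card S \<le> card {1..k}"
    using card_mono[OF _ sub] by simp
  then show ?thesis by simp
qed

lemma ell_eq: "ell k m = {S \<in> GG k. card S = m}"
  unfolding ell_def GG_def sparse_def by (auto simp: subset_iff le_less)

lemma chebP_FF: "chebP (int k) x y = FF k x y"
proof (cases "k = 0")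
  case True
  have "GG 0 = {{}}" by (auto simp: GG_def sparse_def)
  then show ?thesis using True by (simp add: chebP_def FF_def barpos_def)
next
  case False
  let ?g = "\<lambda>S. (-1) ^ card S * (\<Prod>i\<in>barpos k S. x i) * (\<Prod>i\<in>S. y i) :: real"
  have "chebP (int k) x y = (\<Sum>m = 0..k div 2. (-1) ^ m *
              (\<Sum>S\<in>ell k m. (\<Prod>i\<in>barpos k S. x i) * (\<Prod>i\<in>S. y i)))"
    using False by (simp add: chebP_def)
  also have "\<dots> = (\<Sum>m = 0..k div 2. \<Sum>S\<in>{S \<in> GG k. card S = m}. ?g S)"
    by (rule sum.cong[OF refl]) (simp add: ell_eq sum_distrib_left mult.assoc)
  also have "\<dots> = sum ?g (GG k)"
    by (rule sum.group[OF finite_GG]) (auto dest: card_GG)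
  finally show ?thesis by (simp add: FF_def)
qed

lemma GG0: "GG 0 = {{}}" by (auto simp: GG_def sparse_def)
lemma GG1: "GG (Suc 0) = {{}}" by (auto simp: GG_def sparse_def)

lemma FF0: "FF 0 x y = 1" by (simp add: FF_def GG0 barpos_def)
lemma FF1: "FF 1 x y = x 1" by (simp add: FF_def GG1 barpos_def)

lemma GG_split: assumes "2 \<le> k"
  shows "GG k = GG (k-1) \<union> insert (k-1) ` GG (k-2)"
proof
  show "GG k \<subseteq> GG (k-1) \<union> insert (k-1) ` GG (k-2)"
  proof
    fix S assume S: "S \<in> GG k"
    show "S \<in> GG (k-1) \<union> insert (k-1) ` GG (k-2)"
    proof (cases "k - 1 \<in> S")
      case False
      have "t < k - 1" if "t \<in> S" for t
      proof -
        have "t < k" using S that by (auto simp: GG_def)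
        moreover have "t \<noteq> k - 1" using False that by auto
        ultimately show ?thesis by linarith
      qed
      then have "S \<in> GG (k-1)" using S by (auto simp: GG_def)
      then show ?thesis by simp
    next
      case True
      have "S - {k-1} \<in> GG (k-2)"
      proof -
        have "i < k - 2" if "i \<in> S" "i \<noteq> k - 1" for i
        proof -
          have "i < k" using S that by (auto simp: GG_def)
          then have "i < k - 1" using that(2) by linarith
          moreover have "i \<noteq> k - 2"
          proof
            assume "i = k - 2"
            moreover have "sparse S" using S by (simp add: GG_def)
            ultimately have "2 \<le> (k-1) - i" using True that(1) \<open>i < k - 1\<close> unfolding sparse_def by blast
            then show False using \<open>i = k - 2\<close> assms by linarith
          qed
          ultimately show ?thesis by linarith
        qed
        moreover have "i \<ge> 1" if "i \<in> S" for i using S that by (auto simp: GG_def)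
        ultimately have "S - {k-1} \<subseteq> {1..<k-2}" by force
        moreover have "sparse (S - {k-1})" using S by (auto simp: GG_def sparse_def)
        ultimately show ?thesis by (simp add: GG_def)
      qed
      moreover have "S = insert (k-1) (S - {k-1})" using True by auto
      ultimately show ?thesis by blast
    qed
  qed
next
  show "GG (k-1) \<union> insert (k-1) ` GG (k-2) \<subseteq> GG k"
    using assms by (auto simp: GG_def sparse_def subset_iff)
qed

lemma barpos_1: assumes "S \<in> GG (k-1)" "1 \<le> k"
  shows "barpos k S = insert k (barpos (k-1) S)" "k \<notin> barpos (k-1) S"
proof -
  have "S \<subseteq> {1..<k-1}" using assms by (simp add: GG_def)
  then show "barpos k S = insert k (barpos (k-1) S)" using assms(2)
    unfolding barpos_def by (auto simp: subset_iff)
  show "k \<notin> barpos (k-1) S" by (simp add: barpos_def)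
qed

lemma barpos_2: assumes "S \<in> GG (k-2)" "2 \<le> k"
  shows "barpos k (insert (k-1) S) = barpos (k-2) S"
proof -
  have "S \<subseteq> {1..<k-2}" using assms by (simp add: GG_def)
  then show ?thesis using assms(2)
    unfolding barpos_def by (auto simp: subset_iff)
qed

lemma FF_rec: assumes "2 \<le> k"
  shows "FF k x y = x k * FF (k-1) x y - y (k-1) * FF (k-2) x y"
proof -
  let ?g = "\<lambda>k S. (-1) ^ card S * (\<Prod>i\<in>barpos k S. x i) * (\<Prod>i\<in>S. y i) :: real"
  have disj: "GG (k-1) \<inter> insert (k-1) ` GG (k-2) = {}" by (auto simp: GG_def)
  have nin: "k - 1 \<notin> S" if "S \<in> GG (k-2)" for S
  proof
    assume "k - 1 \<in> S"
    then have "k - 1 < k - 2" using that by (auto simp: GG_def)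
    then show False by linarith
  qed
  have finS: "finite S" if "S \<in> GG j" for S j
    using that finite_subset[of S "{1..<j}"] by (auto simp: GG_def)
  have inj: "inj_on (insert (k-1)) (GG (k-2))"
    unfolding inj_on_def using nin by (metis Diff_insert_absorb)
  have "FF k x y = sum (?g k) (GG (k-1)) + sum (?g k) (insert (k-1) ` GG (k-2))"
    unfolding FF_def GG_split[OF assms]
    by (rule sum.union_disjoint[OF finite_GG finite_imageI[OF finite_GG] disj])
  also have "sum (?g k) (GG (k-1)) = x k * FF (k-1) x y"
    unfolding FF_def sum_distrib_left
  proof (rule sum.cong[OF refl])
    fix S assume S: "S \<in> GG (k-1)"
    show "?g k S = x k * ?g (k-1) S"
      using barpos_1[OF S] assms by (simp add: barpos_def)
  qed
  also have "sum (?g k) (insert (k-1) ` GG (k-2)) = sum (?g k \<circ> insert (k-1)) (GG (k-2))"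
    by (rule sum.reindex[OF inj])
  also have "\<dots> = - y (k-1) * FF (k-2) x y"
    unfolding FF_def sum_distrib_left
  proof (rule sum.cong[OF refl])
    fix S assume S: "S \<in> GG (k-2)"
    show "(?g k \<circ> insert (k-1)) S = - y (k-1) * ?g (k-2) S"
      using barpos_2[OF S assms] nin[OF S] finS[OF S] by simp
  qed
  finally show ?thesis by simp
qed

lemma chebP_neg: "i < 0 \<Longrightarrow> chebP i x y = 0" by (simp add: chebP_def)
lemma chebP_nat: "0 \<le> i \<Longrightarrow> chebP i x y = FF (nat i) x y"
  using chebP_FF[of "nat i"] by simp

lemma chebP_rec: assumes "1 \<le> i"
  shows "chebP i x y = x (nat i) * chebP (i-1) x y - y (nat i - 1) * chebP (i-2) x y"
proof (cases "i = 1")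
  case True
  then show ?thesis using chebP_nat[of 1 x y] chebP_nat[of 0 x y] FF0 FF1 chebP_neg[of "-1" x y] by simp
next
  case False
  then have "2 \<le> nat i" using assms by linarith
  from FF_rec[OF this, of x y] show ?thesis using assms False
    by (simp add: chebP_nat nat_diff_distrib)
qed

lemma shift_shift[simp]: "shiftseq m (shiftseq k x) = shiftseq (m + k) x"
  by (simp add: shiftseq_def algebra_simps)
lemma shift0[simp]: "shiftseq 0 x = x" by (simp add: shiftseq_def)
lemma shift_app: "shiftseq m x j = x (j + m)" by (simp add: shiftseq_def)
lemma pmult_shift[simp]: "pmult (shiftseq k a) (shiftseq k c) = shiftseq k (pmult a c)"
  by (simp add: shiftseq_def pmult_def)
lemma pmult_app[simp]: "pmult a c j = a j * c j" by (simp add: pmult_def)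

lemma chebP0[simp]: "chebP 0 x y = 1" by (simp add: chebP_def)
lemma chebPm1[simp]: "chebP (-1) x y = 0" by (simp add: chebP_def)
lemma chebP1[simp]: "chebP 1 x y = x 1" using chebP_rec[of 1 x y] by simp

lemma chebP_left_nat: "1 \<le> m \<Longrightarrow> chebP (int m) x y = x 1 * chebP (int m - 1) (shiftseq 1 x) (shiftseq 1 y)
     - y 1 * chebP (int m - 2) (shiftseq 2 x) (shiftseq 2 y)"
proof (induction m rule: less_induct)
  case (less m)
  show ?case
  proof (cases "m \<le> 2")
    case True
    then consider "m = 1" | "m = 2" using less.prems by linarith
    then show ?thesis
    proof cases
      case 1 then show ?thesis by (simp add: shift_app)
    next
      case 2
      have "chebP 2 x y = x 2 * x 1 - y 1"
        using chebP_rec[of 2 x y] by simp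
      then show ?thesis using 2 by (simp add: numeral_2_eq_2 shift_app)
    qed
  next
    case False
    let ?x1 = "shiftseq 1 x" and ?y1 = "shiftseq 1 y" and ?x2 = "shiftseq 2 x" and ?y2 = "shiftseq 2 y"
    have IH1: "chebP (int m - 1) x y = x 1 * chebP (int m - 2) ?x1 ?y1 - y 1 * chebP (int m - 3) ?x2 ?y2"
      using less.IH[of "m-1"] False by (simp add: of_nat_diff)
    have IH2: "chebP (int m - 2) x y = x 1 * chebP (int m - 3) ?x1 ?y1 - y 1 * chebP (int m - 4) ?x2 ?y2"
      using less.IH[of "m-2"] False by (simp add: of_nat_diff)
    have R0: "chebP (int m) x y = x m * chebP (int m - 1) x y - y (m - 1) * chebP (int m - 2) x y"
      using chebP_rec[of "int m" x y] False by simp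
    have ee: "Suc (m - Suc (Suc 0)) = m - Suc 0" "Suc (Suc (m - Suc (Suc (Suc 0)))) = m - Suc 0"
      "Suc (m - Suc 0) = m" "Suc (Suc (m - Suc (Suc 0))) = m" "Suc (Suc (m - 2)) = m"
      using False by auto
    have R1: "chebP (int m - 1) ?x1 ?y1 = x m * chebP (int m - 2) ?x1 ?y1 - y (m - 1) * chebP (int m - 3) ?x1 ?y1"
      using chebP_rec[of "int m - 1" ?x1 ?y1] False by (simp add: nat_diff_distrib algebra_simps shift_app ee)
    have R2: "chebP (int m - 2) ?x2 ?y2 = x m * chebP (int m - 3) ?x2 ?y2 - y (m - 1) * chebP (int m - 4) ?x2 ?y2"
      using chebP_rec[of "int m - 2" ?x2 ?y2] False by (simp add: nat_diff_distrib algebra_simps shift_app ee)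
    have e1: "int (m-1) = int m - 1" "int (m-2) = int m - 2" using False by auto
    show ?thesis by (simp only: R0 R1 R2 IH1 IH2) (simp add: algebra_simps)
  qed
qed

lemma chebP_left: "1 \<le> i \<Longrightarrow> chebP i x y = x 1 * chebP (i - 1) (shiftseq 1 x) (shiftseq 1 y)
     - y 1 * chebP (i - 2) (shiftseq 2 x) (shiftseq 2 y)"
  using chebP_left_nat[of "nat i" x y] by simp

lemma PhiJ_rec: assumes "1 \<le> k"
  shows "PhiJ a b c (k+1) = b k * PhiJ a b c k - a (k-1) * c (k-1) * PhiJ a b c (k-1)"
proof (cases "k = 1")
  case True
  then show ?thesis by (simp add: PhiJ_def shift_app)
next
  case False
  let ?b1 = "shiftseq 1 b" and ?y = "pmult a c" and ?y1 = "shiftseq 1 (pmult a c)"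
  have A: "PhiJ a b c (k+1) = b 0 * chebP (int k) b ?y - a 0 * c 0 * chebP (int k - 1) ?b1 ?y1"
    by (simp add: PhiJ_def)
  have B: "PhiJ a b c k = b 0 * chebP (int k - 1) b ?y - a 0 * c 0 * chebP (int k - 2) ?b1 ?y1"
    using assms by (simp add: PhiJ_def)
  have C: "PhiJ a b c (k-1) = b 0 * chebP (int k - 2) b ?y - a 0 * c 0 * chebP (int k - 3) ?b1 ?y1"
    using assms False by (simp add: PhiJ_def of_nat_diff)
  have ee: "Suc (k - Suc (Suc 0)) = k - 1" "Suc (k - Suc 0) = k" using assms False by auto
  have R1: "chebP (int k) b ?y = b k * chebP (int k - 1) b ?y - a (k-1) * c (k-1) * chebP (int k - 2) b ?y"
    using chebP_rec[of "int k" b ?y] assms by simp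
  have R2: "chebP (int k - 1) ?b1 ?y1 = b k * chebP (int k - 2) ?b1 ?y1 - a (k-1) * c (k-1) * chebP (int k - 3) ?b1 ?y1"
    using chebP_rec[of "int k - 1" ?b1 ?y1] assms False by (simp add: nat_diff_distrib shift_app ee algebra_simps)
  show ?thesis by (simp only: A B C R1 R2) (simp add: algebra_simps)
qed

lemma PsiJ_rec: assumes "k < n"
  shows "PsiJ n a b c k = b (k+1) * PsiJ n a b c (k+1) - a (k+1) * c (k+1) * PsiJ n a b c (k+2)"
proof (cases "k + 1 = n")
  case True
  then have n: "n = Suc k" by simp
  show ?thesis by (simp add: n PsiJ_def shift_app)
next
  case False
  let ?y = "pmult a c"
  have A: "PsiJ n a b c k = b (n+1) * chebP (int n - int k) (shiftseq k b) (shiftseq k ?y)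
     - a n * c n * chebP (int n - int k - 1) (shiftseq k b) (shiftseq k ?y)"
    using assms by (simp add: PsiJ_def)
  have B: "PsiJ n a b c (k+1) = b (n+1) * chebP (int n - int k - 1) (shiftseq (k+1) b) (shiftseq (k+1) ?y)
     - a n * c n * chebP (int n - int k - 2) (shiftseq (k+1) b) (shiftseq (k+1) ?y)"
    using assms by (simp add: PsiJ_def algebra_simps)
  have C: "PsiJ n a b c (k+2) = b (n+1) * chebP (int n - int k - 2) (shiftseq (k+2) b) (shiftseq (k+2) ?y)
     - a n * c n * chebP (int n - int k - 3) (shiftseq (k+2) b) (shiftseq (k+2) ?y)"
    using assms False by (simp add: PsiJ_def algebra_simps)
  have L1: "chebP (int n - int k) (shiftseq k b) (shiftseq k ?y) =
     b (k+1) * chebP (int n - int k - 1) (shiftseq (k+1) b) (shiftseq (k+1) ?y)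
     - a (k+1) * c (k+1) * chebP (int n - int k - 2) (shiftseq (k+2) b) (shiftseq (k+2) ?y)"
    using chebP_left[of "int n - int k" "shiftseq k b" "shiftseq k ?y"] assms
    by (simp add: shift_app add.commute)
  have L2: "chebP (int n - int k - 1) (shiftseq k b) (shiftseq k ?y) =
     b (k+1) * chebP (int n - int k - 2) (shiftseq (k+1) b) (shiftseq (k+1) ?y)
     - a (k+1) * c (k+1) * chebP (int n - int k - 3) (shiftseq (k+2) b) (shiftseq (k+2) ?y)"
    using chebP_left[of "int n - int k - 1" "shiftseq k b" "shiftseq k ?y"] assms False
    by (simp add: shift_app add.commute algebra_simps)
  show ?thesis by (simp only: A B C L1 L2) (simp add: algebra_simps)
qed

theorem lemma4p1:
  fixes n :: nat and a b c Phi Psi :: "nat \<Rightarrow> real"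
  assumes "n \<ge> 1"
    and "\<And>k. k \<le> n \<Longrightarrow> a k \<noteq> 0"
    and "\<And>k. k \<le> n \<Longrightarrow> c k \<noteq> 0"
    and Phi_eq: "\<And>k. 1 \<le> k \<Longrightarrow> k \<le> n \<Longrightarrow>
                   - a k * Phi (k + 1) + b k * Phi k - c (k - 1) * Phi (k - 1) = 0"
    and "Phi 0 = a 0" and "Phi 1 = b 0"
    and Psi_eq: "\<And>k. 1 \<le> k \<Longrightarrow> k \<le> n \<Longrightarrow>
                   - a k * Psi (k + 1) + b k * Psi k - c (k - 1) * Psi (k - 1) = 0"
    and "Psi n = b (n + 1)" and "Psi (n + 1) = c n"
  shows "(\<forall>k \<le> n + 1.
            Phi k = a 0 * inverse (\<Prod>s<k. a s) * PhiJ a b c k \<and>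
            Psi k = c n * inverse (\<Prod>s\<in>{k..n}. c s) * PsiJ n a b c k)
         \<and> b 0 * Psi 0 - a 0 * Psi 1 = DJ n a b c * inverse (\<Prod>s<n. c s)"
proof -
  note anz = assms(2) and cnz = assms(3)
  have pa: "(\<Prod>s<k. a s) \<noteq> 0" if "k \<le> n + 1" for k
    using anz that by (auto simp: prod_zero_iff)
  have pc: "(\<Prod>s\<in>{k..n}. c s) \<noteq> 0" for k
    using cnz by (auto simp: prod_zero_iff)
  have PHI: "Phi k = a 0 * inverse (\<Prod>s<k. a s) * PhiJ a b c k" if "k \<le> n + 1" for k
    using that
  proof (induction k rule: less_induct)
    case (less k)
    show ?case
    proof (cases k)
      case 0 then show ?thesis using assms(5) by (simp add: PhiJ_def)
    next
      case (Suc j)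
      show ?thesis
      proof (cases j)
        case 0 then show ?thesis using Suc assms(6) anz[of 0] by (simp add: PhiJ_def)
      next
        case (Suc i)
        have k: "k = i + 2" using Suc \<open>k = Suc j\<close> by simp
        have i1: "i + 1 \<le> n" using less.prems k by simp
        have e: "- a (i+1) * Phi (i + 2) + b (i+1) * Phi (i+1) - c i * Phi i = 0"
          using Phi_eq[of "i+1"] i1 by (simp add: numeral_2_eq_2 add.commute)
        have h1: "Phi (i+1) = a 0 * inverse (\<Prod>s<i+1. a s) * PhiJ a b c (i+1)"
          using less.IH[of "i+1"] k i1 by simp
        have h0: "Phi i = a 0 * inverse (\<Prod>s<i. a s) * PhiJ a b c i"
          using less.IH[of "i"] k i1 by simp
        have r: "PhiJ a b c (i+2) = b (i+1) * PhiJ a b c (i+1) - a i * c i * PhiJ a b c i"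
          using PhiJ_rec[of "i+1" a b c] by (simp add: numeral_2_eq_2 add.commute)
        have p2: "(\<Prod>s<i+2. a s) = (\<Prod>s<i. a s) * a i * a (i+1)"
          by (simp add: numeral_2_eq_2)
        have p1: "(\<Prod>s<i+1. a s) = (\<Prod>s<i. a s) * a i" by simp
        have nz: "(\<Prod>s<i. a s) \<noteq> 0" "a i \<noteq> 0" "a (i+1) \<noteq> 0"
          using pa[of i] anz[of i] anz[of "i+1"] i1 by auto
        have "Phi (i+2) = (b (i+1) * Phi (i+1) - c i * Phi i) / a (i+1)"
          using e nz by (simp add: field_simps)
        then show ?thesis unfolding k r p2 h1 h0 p1 using nz
          by (simp add: field_simps)
      qed
    qed
  qed
  define R where "R k = c n * inverse (\<Prod>s\<in>{k..n}. c s) * PsiJ n a b c k" for k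
  have Rn1: "Psi (n+1) = R (n+1)" using assms(9) by (simp add: R_def PsiJ_def)
  have Rn: "Psi n = R n" using assms(8) cnz[of n] by (simp add: R_def PsiJ_def)
  have PSI2: "Psi k = R k \<and> Psi (k+1) = R (k+1)" if "k \<le> n" for k
    using that
  proof (induction k rule: inc_induct)
    case base then show ?case using Rn Rn1 by simp
  next
    case (step k)
    have e: "- a (k+1) * Psi (k + 2) + b (k+1) * Psi (k+1) - c k * Psi k = 0"
      using Psi_eq[of "k+1"] step.hyps by (simp add: numeral_2_eq_2 add.commute)
    have h2: "Psi (k+2) = R (k+2)" using step.IH by (simp add: numeral_2_eq_2)
    have h1: "Psi (k+1) = R (k+1)" using step.IH by simp
    have r: "PsiJ n a b c k = b (k+1) * PsiJ n a b c (k+1) - a (k+1) * c (k+1) * PsiJ n a b c (k+2)"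
      using PsiJ_rec[of k n a b c] step.hyps by simp
    have p1: "(\<Prod>s\<in>{k..n}. c s) = c k * (\<Prod>s\<in>{k+1..n}. c s)"
      using step.hyps by (simp add: prod.atLeast_Suc_atMost)
    have p2: "(\<Prod>s\<in>{k+1..n}. c s) = c (k+1) * (\<Prod>s\<in>{k+2..n}. c s)"
      using step.hyps by (simp add: prod.atLeast_Suc_atMost numeral_2_eq_2)
    have nz: "(\<Prod>s\<in>{k+2..n}. c s) \<noteq> 0" "c k \<noteq> 0" "c (k+1) \<noteq> 0"
      using pc[of "k+2"] cnz[of k] cnz[of "k+1"] step.hyps by auto
    define q where "q = (\<Prod>s\<in>{k+2..n}. c s)"
    have qnz: "q \<noteq> 0" using nz q_def by simp
    have E: "Psi k * c k = b (k+1) * R (k+1) - a (k+1) * R (k+2)"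
      using e h1 h2 by (simp add: algebra_simps)
    have E1: "R (k+1) * (c (k+1) * q) = c n * PsiJ n a b c (k+1)"
      unfolding R_def p2 q_def[symmetric] using nz(3) qnz by (simp add: field_simps)
    have E2: "R (k+2) * q = c n * PsiJ n a b c (k+2)"
      unfolding R_def q_def[symmetric] using qnz by simp
    have "Psi k * (c k * c (k+1) * q) = (Psi k * c k) * (c (k+1) * q)" by simp
    also have "\<dots> = b (k+1) * (R (k+1) * (c (k+1) * q)) - a (k+1) * c (k+1) * (R (k+2) * q)"
      unfolding E by (simp add: algebra_simps)
    also have "\<dots> = c n * PsiJ n a b c k" unfolding E1 E2 r by (simp add: algebra_simps)
    finally have F: "Psi k * (c k * c (k+1) * q) = c n * PsiJ n a b c k" .
    have "R k = c n * PsiJ n a b c k / (c k * c (k+1) * q)"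
      unfolding R_def p1 p2 q_def[symmetric] by (simp add: field_simps)
    also have "\<dots> = Psi k" unfolding F[symmetric] using nz qnz by simp
    finally have "Psi k = R k" by simp
    then show ?case using h1 by simp
  qed
  have PSI: "Psi k = R k" if "k \<le> n + 1" for k
    using PSI2[of k] PSI2[of n] that by (cases "k = n + 1") auto
  have fin: "b 0 * Psi 0 - a 0 * Psi 1 = DJ n a b c * inverse (\<Prod>s<n. c s)"
  proof -
    have p0: "(\<Prod>s\<in>{0..n}. c s) = (\<Prod>s<n. c s) * c n"
      by (simp add: atLeast0AtMost lessThan_Suc_atMost[symmetric])
    have p1: "(\<Prod>s\<in>{1..n}. c s) = (\<Prod>s\<in>{1..<n}. c s) * c n"
      using assms(1) by (simp add: prod.atLeastLessThan_Suc atLeastLessThanSuc_atLeastAtMost[symmetric])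
    have p2: "(\<Prod>s<n. c s) = c 0 * (\<Prod>s\<in>{1..<n}. c s)"
      using assms(1) by (simp add: prod.atLeast0_lessThan_Suc_shift lessThan_atLeast0 prod.atLeast_Suc_lessThan)
    have nz: "(\<Prod>s\<in>{1..<n}. c s) \<noteq> 0" "c n \<noteq> 0" "c 0 \<noteq> 0"
      using cnz by (auto simp: prod_zero_iff)
    have "b 0 * Psi 0 - a 0 * Psi 1 = b 0 * R 0 - a 0 * R 1" using PSI[of 0] PSI[of 1] assms(1) by simp
    also have "\<dots> = DJ n a b c * inverse (\<Prod>s<n. c s)"
      unfolding R_def p0 p1 p2 using nz assms(1)
      by (simp add: PsiJ_def DJ_def field_simps)
    finally show ?thesis .
  qed
  show ?thesis using PHI PSI fin unfolding R_def by blast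
qed

end
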